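(* Let $\delta,\xi\in(0,1/2)$, $\lambda\in(0,1/2)$, let $n$ be a positive integer and $M=2^{n(C-\xi)}$ an integer. Suppose $\{(\mathbf u_k,\mathcal E_k):k=1,\dots,M\}$ is a transmission code with distinct $\mathbf u_k\in\mathcal X^n$, pairwise disjoint $\mathcal E_k\subseteq\mathcal Y^n$, and $W(\mathcal E_k^c\mid\mathbf u_k)\le\delta$ for all $k$; let $\mathcal Z=\{\mathbf u_1,\dots,\mathbf u_M\}$. Let $\epsilon$ satisfy $\frac16>\epsilon\ge 2^{-n(C-\xi)}$, let $M'=\lceil\epsilon M\rceil$, and let $m$ be a positive integer with $2^m\le \binom{M'}{\lceil\lambda M'\rceil}^{-1}M'^{-1}\left(\frac{1-\epsilon}{2\epsilon}\right)^{\lceil\lambda M'\rceil}$. Let $(A_i)_{i\in\{0,1\}^m}$ be subsets of $\mathcal Z$ with $|A_i|=M'$ and $|A_i\cap A_{i'}|<\lambda M'$ for $i\ne i'$. Define the encoder $Q_i(\mathbf x)=\mathbf 1_{\mathbf x\in A_i}/|A_i|$ for $i\in\{0,1\}^m$ and, for each $f\in\mathcal F_m^{\mathrm W}(\le S)$, the decoding set $\mathcal D_f=\bigcup_{k:\,\mathbf u_k\in B_f}\mathcal E_k$ where $B_f=\bigcup_{\ell\in f^{-1}[1]}A_\ell$. Then this is an $(n,m,\mathcal F_m^{\mathrm W}(\le S),\lambda_1,\lambda_2)$ BFC code with $\lambda_1=\delta$ and $\lambda_2=S\lambda+\delta$.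
   Context: A channel with input alphabet $\mathcal X$ and output alphabet $\mathcal Y$ is given by conditional distributions $W(\cdot\mid x^n)$ on $\mathcal Y^n$; $C$ is its Shannon capacity. $\mathcal F_m$ is the set of all Boolean functions $\{0,1\}^m\to\{0,1\}$ and $\mathcal F_m^{\mathrm W}(\le S)=\{f\in\mathcal F_m:|f^{-1}[1]|\le S\}$. For $\mathcal F\subseteq\mathcal F_m$, an $(n,m,\mathcal F,\lambda_1,\lambda_2)$ BFC code consists of probability distributions $Q_i$ on $\mathcal X^n$ ($i\in\{0,1\}^m$) and sets $D_f\subseteq\mathcal Y^n$ ($f\in\mathcal F$) such that for all $i,f$: if $f(i)=1$ then $Q_iW(D_f^c)\le\lambda_1$, and if $f(i)=0$ then $Q_iW(D_f)\le\lambda_2$, where $QW(D)=\sum_xQ(x)W(D\mid x)$. *)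

theory Defs
  imports Complex_Main
begin

definition words :: "nat \<Rightarrow> 'a list set" where
  "words n = {xs. length xs = n}"

definition channel :: "('x list \<Rightarrow> 'y list \<Rightarrow> real) \<Rightarrow> bool" where
  "channel W \<longleftrightarrow> (\<forall>xs ys. 0 \<le> W xs ys) \<and>
     (\<forall>xs ys. length ys \<noteq> length xs \<longrightarrow> W xs ys = 0) \<and>
     (\<forall>xs. (\<Sum>ys\<in>words (length xs). W xs ys) = 1)"

definition Wset :: "('x list \<Rightarrow> 'y list \<Rightarrow> real) \<Rightarrow> 'x list \<Rightarrow> 'y list set \<Rightarrow> real" where
  "Wset W xs D = (\<Sum>ys\<in>D \<inter> words (length xs). W xs ys)"

definition QW :: "nat \<Rightarrow> ('x list \<Rightarrow> real) \<Rightarrow> ('x list \<Rightarrow> 'y list \<Rightarrow> real) \<Rightarrow> 'y list set \<Rightarrow> real" where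
  "QW n Q W D = (\<Sum>xs\<in>words n. Q xs * Wset W xs D)"

definition prob_dist_on :: "'a set \<Rightarrow> ('a \<Rightarrow> real) \<Rightarrow> bool" where
  "prob_dist_on A Q \<longleftrightarrow> (\<forall>x. 0 \<le> Q x) \<and> (\<forall>x. x \<notin> A \<longrightarrow> Q x = 0) \<and> (\<Sum>x\<in>A. Q x) = 1"

text \<open>Boolean functions {0,1}^m -> {0,1}: inputs are bool lists of length m; we
  normalise the function to be False outside {0,1}^m.\<close>
definition boolfuns :: "nat \<Rightarrow> (bool list \<Rightarrow> bool) set" where
  "boolfuns m = {f. \<forall>i. length i \<noteq> m \<longrightarrow> \<not> f i}"

definition preimage1 :: "nat \<Rightarrow> (bool list \<Rightarrow> bool) \<Rightarrow> bool list set" where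
  "preimage1 m f = {i \<in> words m. f i}"

definition boolfuns_weight :: "nat \<Rightarrow> nat \<Rightarrow> (bool list \<Rightarrow> bool) set" where
  "boolfuns_weight m S = {f \<in> boolfuns m. card (preimage1 m f) \<le> S}"

definition bfc_code :: "nat \<Rightarrow> nat \<Rightarrow> (bool list \<Rightarrow> bool) set \<Rightarrow> real \<Rightarrow> real \<Rightarrow>
    ('x list \<Rightarrow> 'y list \<Rightarrow> real) \<Rightarrow> (bool list \<Rightarrow> 'x list \<Rightarrow> real) \<Rightarrow>
    ((bool list \<Rightarrow> bool) \<Rightarrow> 'y list set) \<Rightarrow> bool" where
  "bfc_code n m F lam1 lam2 W Q D \<longleftrightarrow>
     (\<forall>i\<in>words m. prob_dist_on (words n) (Q i)) \<and>
     (\<forall>f\<in>F. D f \<subseteq> words n) \<and>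
     (\<forall>i\<in>words m. \<forall>f\<in>F.
        (f i \<longrightarrow> QW n (Q i) W (words n - D f) \<le> lam1) \<and>
        (\<not> f i \<longrightarrow> QW n (Q i) W (D f) \<le> lam2))"

end

theory Submission
  imports Defs
begin

lemma finite_words: "finite (words n :: ('a::finite) list set)"
proof -
  have "words n = {xs. set xs \<subseteq> (UNIV::'a set) \<and> length xs = n}" by (auto simp: words_def)
  then show ?thesis using finite_lists_length_eq[of "UNIV::'a set" n] by simp
qed

lemma Wset_mono:
  fixes W :: "('x::finite) list \<Rightarrow> ('y::finite) list \<Rightarrow> real"
  assumes "channel W" "D \<subseteq> D'"
  shows "Wset W x D \<le> Wset W x D'"
  unfolding Wset_def
  by (rule sum_mono2) (use assms finite_words in \<open>auto simp: channel_def\<close>)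

lemma Wset_le1:
  fixes W :: "('x::finite) list \<Rightarrow> ('y::finite) list \<Rightarrow> real"
  assumes "channel W"
  shows "Wset W x D \<le> 1"
proof -
  have "Wset W x D \<le> (\<Sum>ys\<in>words (length x). W x ys)"
    unfolding Wset_def
    by (rule sum_mono2) (use assms finite_words in \<open>auto simp: channel_def\<close>)
  also have "\<dots> = 1" using assms by (simp add: channel_def)
  finally show ?thesis .
qed

lemma QW_indicator:
  fixes W :: "('x::finite) list \<Rightarrow> ('y::finite) list \<Rightarrow> real"
  assumes "A \<subseteq> words n"
  shows "QW n (\<lambda>x. if x \<in> A then c else 0) W D = c * (\<Sum>x\<in>A. Wset W x D)"
proof -
  have "QW n (\<lambda>x. if x \<in> A then c else 0) W D = (\<Sum>x\<in>words n. if x \<in> A then c * Wset W x D else 0)"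
    unfolding QW_def by (rule sum.cong) auto
  also have "\<dots> = (\<Sum>x\<in>words n \<inter> A. c * Wset W x D)"
    by (simp add: sum.inter_restrict[OF finite_words])
  also have "words n \<inter> A = A" using assms by auto
  finally show ?thesis by (simp add: sum_distrib_left)
qed

theorem lemma3:
  fixes W :: "('x::finite) list \<Rightarrow> ('y::finite) list \<Rightarrow> real"
    and C \<delta> \<xi> lam \<epsilon> :: real
    and n m M S :: nat
    and u :: "nat \<Rightarrow> 'x list" and E :: "nat \<Rightarrow> 'y list set"
    and A :: "bool list \<Rightarrow> 'x list set"
  assumes W: "channel W"
    and \<delta>: "0 < \<delta>" "\<delta> < 1/2"
    and \<xi>: "0 < \<xi>" "\<xi> < 1/2"
    and lam: "0 < lam" "lam < 1/2"
    and n: "0 < n"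
    and M: "real M = 2 powr (real n * (C - \<xi>))"
    and u_len: "\<forall>k\<in>{1..M}. u k \<in> words n"
    and u_inj: "inj_on u {1..M}"
    and E_sub: "\<forall>k\<in>{1..M}. E k \<subseteq> words n"
    and E_disj: "\<forall>k\<in>{1..M}. \<forall>k'\<in>{1..M}. k \<noteq> k' \<longrightarrow> E k \<inter> E k' = {}"
    and E_err: "\<forall>k\<in>{1..M}. Wset W (u k) (words n - E k) \<le> \<delta>"
    and \<epsilon>: "\<epsilon> < 1/6" "2 powr (- (real n * (C - \<xi>))) \<le> \<epsilon>"
    and m: "0 < m"
    and m_bound: "let M' = nat \<lceil>\<epsilon> * real M\<rceil>; L = nat \<lceil>lam * real M'\<rceil> in
         (2::real) ^ m \<le> inverse (real (M' choose L)) * inverse (real M') * ((1 - \<epsilon>) / (2 * \<epsilon>)) ^ L"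
    and A_sub: "\<forall>i\<in>words m. A i \<subseteq> u ` {1..M}"
    and A_card: "\<forall>i\<in>words m. card (A i) = nat \<lceil>\<epsilon> * real M\<rceil>"
    and A_int: "\<forall>i\<in>words m. \<forall>i'\<in>words m. i \<noteq> i' \<longrightarrow>
         real (card (A i \<inter> A i')) < lam * real (nat \<lceil>\<epsilon> * real M\<rceil>)"
  shows "bfc_code n m (boolfuns_weight m S) \<delta> (real S * lam + \<delta>) W
           (\<lambda>i xs. if xs \<in> A i then 1 / real (card (A i)) else 0)
           (\<lambda>f. \<Union>{E k | k. k \<in> {1..M} \<and> u k \<in> (\<Union>l\<in>preimage1 m f. A l)})"
proof -
  define K where "K = nat \<lceil>\<epsilon> * real M\<rceil>"
  define B where "B f = (\<Union>l\<in>preimage1 m f. A l)" for f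
  define D where "D f = \<Union>{E k | k. k \<in> {1..M} \<and> u k \<in> B f}" for f
  have Mpos: "real M > 0" using M by simp
  hence "real M \<ge> 1" by simp
  have "2 powr (- (real n * (C - \<xi>))) * real M = 1"
    using M by (simp add: powr_minus)
  hence "\<epsilon> * real M \<ge> 1" using \<epsilon>(2) Mpos by (metis mult_right_mono less_imp_le)
  hence Kpos: "K \<ge> 1" unfolding K_def by linarith
  have Afin: "finite (A i)" if "i \<in> words m" for i
    using A_sub that by (meson finite_atLeastAtMost finite_imageI finite_subset)
  have Awords: "A i \<subseteq> words n" if "i \<in> words m" for i
    using A_sub u_len that by blast
  have Acard: "real (card (A i)) = real K" if "i \<in> words m" for i
    using A_card that K_def by simp
  have DE: "E k \<subseteq> D f" if "k \<in> {1..M}" "u k \<in> B f" for k f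
    using that unfolding D_def by blast
  have DnE: "D f \<inter> E k = {}" if "k \<in> {1..M}" "u k \<notin> B f" for k f
  proof -
    { fix y k' assume "y \<in> E k'" "k' \<in> {1..M}" "u k' \<in> B f" "y \<in> E k"
      then have "k' \<noteq> k" using that by auto
      then have False using E_disj \<open>y \<in> E k'\<close> \<open>y \<in> E k\<close> \<open>k' \<in> {1..M}\<close> that(1) by blast }
    then show ?thesis unfolding D_def by blast
  qed
  have QWeq: "QW n (\<lambda>xs. if xs \<in> A i then 1 / real (card (A i)) else 0) W X
      = (1 / real K) * (\<Sum>x\<in>A i. Wset W x X)" if "i \<in> words m" for i X
    using QW_indicator[OF Awords[OF that], of "1 / real (card (A i))" W X] Acard[OF that] by simp
  have part1: "\<forall>i\<in>words m. prob_dist_on (words n) (\<lambda>xs. if xs \<in> A i then 1 / real (card (A i)) else 0)"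
  proof
    fix i :: "bool list" assume i: "i \<in> words m"
    have "(\<Sum>x\<in>words n. if x \<in> A i then 1 / real (card (A i)) else 0)
        = (\<Sum>x\<in>words n \<inter> A i. 1 / real (card (A i)))"
      by (rule sum.inter_restrict[OF finite_words, symmetric])
    also have "words n \<inter> A i = A i" using Awords[OF i] by auto
    finally show "prob_dist_on (words n) (\<lambda>xs. if xs \<in> A i then 1 / real (card (A i)) else 0)"
      unfolding prob_dist_on_def using Awords[OF i] Acard[OF i] Kpos by auto
  qed
  have part2: "\<forall>f\<in>boolfuns_weight m S. D f \<subseteq> words n"
    using E_sub unfolding D_def by blast
  have part3: "(f i \<longrightarrow> QW n (\<lambda>xs. if xs \<in> A i then 1 / real (card (A i)) else 0) W (words n - D f) \<le> \<delta>) \<and>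
        (\<not> f i \<longrightarrow> QW n (\<lambda>xs. if xs \<in> A i then 1 / real (card (A i)) else 0) W (D f) \<le> real S * lam + \<delta>)"
    if i: "i \<in> words m" and f: "f \<in> boolfuns_weight m S" for i f
  proof (intro conjI impI)
    assume fi: "f i"
    have "(\<Sum>x\<in>A i. Wset W x (words n - D f)) \<le> (\<Sum>x\<in>A i. \<delta>)"
    proof (rule sum_mono)
      fix x assume x: "x \<in> A i"
      then obtain k where k: "k \<in> {1..M}" "x = u k" using A_sub i by blast
      have "i \<in> preimage1 m f" using i fi by (simp add: preimage1_def)
      hence "u k \<in> B f" using x k unfolding B_def by blast
      hence "words n - D f \<subseteq> words n - E k" using DE k by blast
      hence "Wset W x (words n - D f) \<le> Wset W (u k) (words n - E k)"
        using Wset_mono[OF W] k by blast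
      then show "Wset W x (words n - D f) \<le> \<delta>" using E_err k by force
    qed
    also have "\<dots> = real K * \<delta>" using Acard[OF i] by simp
    finally show "QW n (\<lambda>xs. if xs \<in> A i then 1 / real (card (A i)) else 0) W (words n - D f) \<le> \<delta>"
      unfolding QWeq[OF i] using Kpos by (simp add: field_simps)
  next
    assume fi: "\<not> f i"
    let ?P = "preimage1 m f"
    have Pfin: "finite ?P" unfolding preimage1_def using finite_words
      by (metis (no_types, lifting) finite_subset mem_Collect_eq subsetI)
    have Pcard: "card ?P \<le> S" using f by (simp add: boolfuns_weight_def)
    have iP: "i \<notin> ?P" using fi by (simp add: preimage1_def)
    have AiB: "A i \<inter> B f = (\<Union>l\<in>?P. A i \<inter> A l)" unfolding B_def by blast
    have "card (A i \<inter> B f) \<le> (\<Sum>l\<in>?P. card (A i \<inter> A l))"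
      unfolding AiB by (rule card_UN_le[OF Pfin])
    hence "real (card (A i \<inter> B f)) \<le> (\<Sum>l\<in>?P. real (card (A i \<inter> A l)))"
      by (metis of_nat_le_iff of_nat_sum)
    also have "\<dots> \<le> (\<Sum>l\<in>?P. lam * real K)"
    proof (rule sum_mono)
      fix l assume l: "l \<in> ?P"
      hence "l \<in> words m" "l \<noteq> i" using iP by (auto simp: preimage1_def)
      then show "real (card (A i \<inter> A l)) \<le> lam * real K"
        using A_int i unfolding K_def by (metis less_imp_le)
    qed
    also have "\<dots> = real (card ?P) * lam * real K" by simp
    also have "\<dots> \<le> real S * lam * real K"
      using Pcard lam by (simp add: mult_right_mono)
    finally have cardB: "real (card (A i \<inter> B f)) \<le> real S * lam * real K" .
    have "(\<Sum>x\<in>A i. Wset W x (D f)) = (\<Sum>x\<in>A i \<inter> B f. Wset W x (D f)) + (\<Sum>x\<in>A i - B f. Wset W x (D f))"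
      using Afin[OF i] by (metis sum.Int_Diff)
    also have "(\<Sum>x\<in>A i \<inter> B f. Wset W x (D f)) \<le> (\<Sum>x\<in>A i \<inter> B f. 1)"
      by (rule sum_mono) (rule Wset_le1[OF W])
    also have "(\<Sum>x\<in>A i - B f. Wset W x (D f)) \<le> (\<Sum>x\<in>A i - B f. \<delta>)"
    proof (rule sum_mono)
      fix x assume x: "x \<in> A i - B f"
      then obtain k where k: "k \<in> {1..M}" "x = u k" using A_sub i by blast
      have "D f \<subseteq> words n - E k" using DnE[of k f] k x part2 f by blast
      hence "Wset W x (D f) \<le> Wset W (u k) (words n - E k)"
        using Wset_mono[OF W] k by blast
      then show "Wset W x (D f) \<le> \<delta>" using E_err k by force
    qed
    also have "(\<Sum>x\<in>A i - B f. \<delta>) \<le> (\<Sum>x\<in>A i. \<delta>)"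
      by (rule sum_mono2) (use Afin[OF i] \<delta> in auto)
    also have "(\<Sum>x\<in>A i. \<delta>) = real K * \<delta>" using Acard[OF i] by simp
    finally have "(\<Sum>x\<in>A i. Wset W x (D f)) \<le> real S * lam * real K + real K * \<delta>"
      using cardB by simp
    then show "QW n (\<lambda>xs. if xs \<in> A i then 1 / real (card (A i)) else 0) W (D f) \<le> real S * lam + \<delta>"
      unfolding QWeq[OF i] using Kpos by (simp add: field_simps)
  qed
  show ?thesis
    unfolding bfc_code_def using part1 part2 part3
    unfolding D_def B_def by blast
qed

end
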